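(* For every NFA $\mathcal A$, the relation $S(\subseteq^{\mathrm{bw}},\supseteq^{\mathrm{bw}})$ is good for saturation, i.e. $\mathcal L(\mathrm{Sat}(\mathcal A,S(\subseteq^{\mathrm{bw}},\supseteq^{\mathrm{bw}})))=\mathcal L(\mathcal A)$.
   Context: An NFA $\mathcal A=(\Sigma,Q,I,F,\delta)$, $\delta\subseteq Q\times\Sigma\times Q$; its language is the set of finite words with a finite trace starting in $I$ and ending in $F$. Backward finite trace inclusion: $p\subseteq^{\mathrm{bw}}q$ iff for every finite word $w$, if some $w$-trace starting in $I$ ends in $p$, then some $w$-trace starting in $I$ ends in $q$; $\supseteq^{\mathrm{bw}}$ is its inverse. Let $\Delta=Q\times\Sigma\times Q$; $S(R_b,R_f)=\{((p,\sigma,r),(p',\sigma,r'))\in\Delta\times\Delta:p\,R_b\,p',\ r\,R_f\,r'\}$. For reflexive $S\subseteq\Delta\times\Delta$, $\mathrm{Sat}(\mathcal A,S)=(\Sigma,Q,I,F,\{t'\in\Delta:\exists t\in\delta,(t',t)\in S\})$. *)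

theory Defs
  imports Main
begin

record ('s, 'q) nfa =
  alph :: "'s set"
  states :: "'q set"
  init :: "'q set"
  final :: "'q set"
  trans :: "('q \<times> 's \<times> 'q) set"

definition wf_nfa :: "('s, 'q) nfa \<Rightarrow> bool" where
  "wf_nfa A \<longleftrightarrow> finite (alph A) \<and> finite (states A) \<and> init A \<subseteq> states A
     \<and> final A \<subseteq> states A \<and> trans A \<subseteq> states A \<times> alph A \<times> states A"

inductive run :: "('q \<times> 's \<times> 'q) set \<Rightarrow> 'q \<Rightarrow> 's list \<Rightarrow> 'q \<Rightarrow> bool" for d where
  run_nil: "run d p [] p"
| run_cons: "(p, a, r) \<in> d \<Longrightarrow> run d r w q \<Longrightarrow> run d p (a # w) q"

definition lang :: "('s, 'q) nfa \<Rightarrow> 's list set" where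
  "lang A = {w. set w \<subseteq> alph A \<and> (\<exists>i\<in>init A. \<exists>f\<in>final A. run (trans A) i w f)}"

definition Delta :: "('s, 'q) nfa \<Rightarrow> ('q \<times> 's \<times> 'q) set" where
  "Delta A = states A \<times> alph A \<times> states A"

definition bw_incl :: "('s, 'q) nfa \<Rightarrow> ('q \<times> 'q) set" where
  "bw_incl A = {(p, q). p \<in> states A \<and> q \<in> states A \<and>
     (\<forall>w. (\<exists>i\<in>init A. run (trans A) i w p) \<longrightarrow> (\<exists>i\<in>init A. run (trans A) i w q))}"

definition S_rel :: "('s, 'q) nfa \<Rightarrow> ('q \<times> 'q) set \<Rightarrow> ('q \<times> 'q) set
    \<Rightarrow> (('q \<times> 's \<times> 'q) \<times> ('q \<times> 's \<times> 'q)) set" where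
  "S_rel A Rb Rf = {((p, a, r), (p', a', r')). (p, a, r) \<in> Delta A \<and> (p', a', r') \<in> Delta A
      \<and> a = a' \<and> (p, p') \<in> Rb \<and> (r, r') \<in> Rf}"

definition Sat :: "('s, 'q) nfa \<Rightarrow> (('q \<times> 's \<times> 'q) \<times> ('q \<times> 's \<times> 'q)) set \<Rightarrow> ('s, 'q) nfa" where
  "Sat A S = A\<lparr>trans := {t' \<in> Delta A. \<exists>t\<in>trans A. (t', t) \<in> S}\<rparr>"

end

theory Submission
  imports Defs
begin

lemma run_snoc: "run d i u p \<Longrightarrow> (p, a, r) \<in> d \<Longrightarrow> run d i (u @ [a]) r"
  by (induction rule: run.induct) (auto intro: run.intros)

lemma run_mono: "run d p w q \<Longrightarrow> d \<subseteq> d' \<Longrightarrow> run d' p w q"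
  by (induction rule: run.induct) (auto intro: run.intros)

lemma back_run:
  assumes "run (trans (Sat A (S_rel A (bw_incl A) (converse (bw_incl A))))) p w q"
  shows "\<And>u. (\<exists>i\<in>init A. run (trans A) i u p) \<Longrightarrow> (\<exists>i\<in>init A. run (trans A) i (u @ w) q)"
  using assms
proof (induction rule: run.induct)
  case (run_nil p) then show ?case by simp
next
  case (run_cons p a r w q u)
  from run_cons.hyps(1) obtain p' r' where t: "(p', a, r') \<in> trans A"
    and b1: "(p, p') \<in> bw_incl A" and b2: "(r', r) \<in> bw_incl A"
    unfolding Sat_def S_rel_def by auto
  from run_cons.prems b1 obtain i where "i \<in> init A" "run (trans A) i u p'"
    unfolding bw_incl_def by auto
  then have "run (trans A) i (u @ [a]) r'" using t run_snoc by metis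
  with \<open>i \<in> init A\<close> b2 have "\<exists>i\<in>init A. run (trans A) i (u @ [a]) r"
    unfolding bw_incl_def by auto
  from run_cons.IH[OF this] show ?case by simp
qed

theorem theorem10p8:
  fixes A :: "('s, 'q) nfa"
  assumes "wf_nfa A"
  shows "lang (Sat A (S_rel A (bw_incl A) (converse (bw_incl A)))) = lang A"
proof
  show "lang (Sat A (S_rel A (bw_incl A) (converse (bw_incl A)))) \<subseteq> lang A"
  proof
    fix w assume "w \<in> lang (Sat A (S_rel A (bw_incl A) (converse (bw_incl A))))"
    then obtain i f where "set w \<subseteq> alph A" "i \<in> init A" "f \<in> final A"
      "run (trans (Sat A (S_rel A (bw_incl A) (converse (bw_incl A))))) i w f"
      unfolding lang_def Sat_def by auto
    moreover from back_run[OF this(4), of "[]"] this(2) have "\<exists>i\<in>init A. run (trans A) i w f"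
      by (auto intro: run.intros)
    ultimately show "w \<in> lang A" unfolding lang_def by auto
  qed
next
  have sub: "trans A \<subseteq> trans (Sat A (S_rel A (bw_incl A) (converse (bw_incl A))))"
  proof
    fix t assume t: "t \<in> trans A"
    obtain p a r where tt: "t = (p, a, r)" by (cases t) auto
    with t assms have "p \<in> states A" "r \<in> states A" "a \<in> alph A"
      unfolding wf_nfa_def by auto
    then show "t \<in> trans (Sat A (S_rel A (bw_incl A) (converse (bw_incl A))))"
      using t tt unfolding Sat_def S_rel_def Delta_def bw_incl_def by fastforce
  qed
  show "lang A \<subseteq> lang (Sat A (S_rel A (bw_incl A) (converse (bw_incl A))))"
    unfolding lang_def using run_mono[OF _ sub] by (auto simp: Sat_def) blast
qed

end
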